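(* The space $\Gamma(S^1)$ is homotopy equivalent to a wedge of two circles; in particular it is a $K(F_2,1)$ with $F_2$ the free group on two generators.
   Context: $Y=\mathbb C\setminus\{(\lambda,0):\lambda\in\mathbb Z\}$. $\Gamma(S^1)=\mathbb R\times_{\mathbb Z}Y$, the quotient of $\mathbb R\times Y$ by the diagonal $\mathbb Z$-action in which the generator acts by $s\mapsto s+1$ on $\mathbb R$ and by $z\mapsto1+\overline z$ on $Y$; it is a fibre bundle over $S^1=\mathbb R/\mathbb Z$ with fibre $Y$. *)

theory Defs
  imports "HOL-Analysis.Analysis"
begin

definition quot_topology :: "'a topology \<Rightarrow> ('a \<Rightarrow> 'b) \<Rightarrow> 'b topology" where
  "quot_topology X f = topology (\<lambda>U. U \<subseteq> f ` topspace X \<and> openin X {x \<in> topspace X. f x \<in> U})"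

lemma istopology_quot: "istopology (\<lambda>U. U \<subseteq> f ` topspace X \<and> openin X {x \<in> topspace X. f x \<in> U})"
proof -
  have 1: "{x \<in> topspace X. f x \<in> S \<inter> T} = {x \<in> topspace X. f x \<in> S} \<inter> {x \<in> topspace X. f x \<in> T}" for S T
    by auto
  have 2: "{x \<in> topspace X. f x \<in> \<Union>K} = (\<Union>S\<in>K. {x \<in> topspace X. f x \<in> S})" for K
    by auto
  show ?thesis
    unfolding istopology_def 1 2 by (auto intro!: openin_Int openin_Union)
qed

definition Yset :: "complex set" where
  "Yset = {z. \<not> (Im z = 0 \<and> Re z \<in> \<int>)}"

definition gen_act :: "real \<times> complex \<Rightarrow> real \<times> complex" where
  "gen_act p = (fst p + 1, 1 + cnj (snd p))"

definition orbit_Z :: "real \<times> complex \<Rightarrow> (real \<times> complex) set" where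
  "orbit_Z p = {q. \<exists>n::nat. q = (gen_act ^^ n) p \<or> p = (gen_act ^^ n) q}"

text \<open>Gamma(S^1) = R x_Z Y, with the quotient topology.\<close>
definition Gamma_S1 :: "(real \<times> complex) set topology" where
  "Gamma_S1 = quot_topology (subtopology euclidean (UNIV \<times> Yset)) orbit_Z"

definition wedge_two_circles :: "complex topology" where
  "wedge_two_circles = subtopology euclidean (sphere (-1) 1 \<union> sphere 1 1)"

end

theory Submission
  imports Defs
begin


lemma gen_act_inj: "gen_act p = gen_act q \<Longrightarrow> p = q"
  by (cases p; cases q) (auto simp: gen_act_def complex_eq_iff)

lemma in_orbit_self: "p \<in> orbit_Z p"
  unfolding orbit_Z_def by (auto intro: exI[of _ 0])

lemma orbit_gen_act: "orbit_Z (gen_act p) = orbit_Z p"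
proof (intro set_eqI iffI)
  fix q assume "q \<in> orbit_Z (gen_act p)"
  then obtain n where "q = (gen_act ^^ n) (gen_act p) \<or> gen_act p = (gen_act ^^ n) q"
    unfolding orbit_Z_def by blast
  then show "q \<in> orbit_Z p"
  proof
    assume "q = (gen_act ^^ n) (gen_act p)"
    then have "q = (gen_act ^^ Suc n) p" by (simp add: funpow_swap1)
    then show ?thesis unfolding orbit_Z_def by blast
  next
    assume h: "gen_act p = (gen_act ^^ n) q"
    show ?thesis
    proof (cases n)
      case 0 then have "q = (gen_act ^^ 1) p" using h by simp
      then show ?thesis unfolding orbit_Z_def by blast
    next
      case (Suc m) then have "p = (gen_act ^^ m) q" using h gen_act_inj by simp
      then show ?thesis unfolding orbit_Z_def by blast
    qed
  qed
next
  fix q assume "q \<in> orbit_Z p"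
  then obtain n where "q = (gen_act ^^ n) p \<or> p = (gen_act ^^ n) q"
    unfolding orbit_Z_def by blast
  then show "q \<in> orbit_Z (gen_act p)"
  proof
    assume h: "q = (gen_act ^^ n) p"
    show ?thesis
    proof (cases n)
      case 0 then have "gen_act p = (gen_act ^^ 1) q" using h by simp
      then show ?thesis unfolding orbit_Z_def by blast
    next
      case (Suc m) then have "q = (gen_act ^^ m) (gen_act p)" using h by (simp add: funpow_swap1)
      then show ?thesis unfolding orbit_Z_def by blast
    qed
  next
    assume "p = (gen_act ^^ n) q"
    then have "gen_act p = (gen_act ^^ Suc n) q" by simp
    then show ?thesis unfolding orbit_Z_def by blast
  qed
qed

lemma invariant_orbit:
  assumes inv: "\<And>p. F (gen_act p) = F p" and "p' \<in> orbit_Z p"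
  shows "F p' = F p"
proof -
  have *: "F ((gen_act ^^ n) x) = F x" for n x
    by (induction n) (simp_all add: inv)
  from assms(2) obtain n where "p' = (gen_act ^^ n) p \<or> p = (gen_act ^^ n) p'"
    unfolding orbit_Z_def by blast
  then show ?thesis using * by metis
qed

lemma invariant_some:
  assumes inv: "\<And>p. F (gen_act p) = F p"
  shows "F (SOME p'. p' \<in> orbit_Z p) = F p"
  by (rule invariant_orbit[where F=F, OF inv]) (rule someI[where P="\<lambda>x. x \<in> orbit_Z p", OF in_orbit_self])

lemma topspace_quot: "topspace (quot_topology X f) = f ` topspace X"
proof -
  have o: "openin (quot_topology X f) = (\<lambda>U. U \<subseteq> f ` topspace X \<and> openin X {x \<in> topspace X. f x \<in> U})"
    unfolding quot_topology_def by (rule topology_inverse'[OF istopology_quot])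
  have e: "{x \<in> topspace X. f x \<in> f ` topspace X} = topspace X" by auto
  have "openin (quot_topology X f) (f ` topspace X)"
    unfolding o e by auto
  then have "f ` topspace X \<subseteq> topspace (quot_topology X f)"
    by (simp add: openin_subset)
  moreover have "topspace (quot_topology X f) \<subseteq> f ` topspace X"
    unfolding topspace_def o by auto
  ultimately show ?thesis by blast
qed

lemma quotient_map_quot: "quotient_map X (quot_topology X f) f"
proof -
  have o: "openin (quot_topology X f) = (\<lambda>U. U \<subseteq> f ` topspace X \<and> openin X {x \<in> topspace X. f x \<in> U})"
    unfolding quot_topology_def by (rule topology_inverse'[OF istopology_quot])
  show ?thesis unfolding quotient_map_def topspace_quot o by auto
qed



definition Nf :: "complex \<Rightarrow> real" where "Nf z = - (Im z * cos (pi * Re z))"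
definition Dd :: "complex \<Rightarrow> real" where "Dd z = (sin (pi * Re z))\<^sup>2 + (Im z)\<^sup>2"
definition hh :: "complex \<Rightarrow> real" where "hh z = sin (pi * Re z) * cos (pi * Re z) / Dd z"
definition XX :: "complex \<Rightarrow> real" where "XX z = Re z + arctan (hh z) / pi"
definition Pc :: "real \<Rightarrow> real \<times> complex" where
  "Pc x = (x, complex_of_real x + \<i> * complex_of_real (cos (pi * x)))"
definition Qc :: "real \<Rightarrow> real \<times> complex" where
  "Qc x = (x, complex_of_real x - \<i> * complex_of_real (cos (pi * x)))"
definition rr :: "complex \<Rightarrow> complex" where
  "rr z = (if Nf z \<le> 0 then snd (Pc (XX z)) else snd (Qc (XX z)))"
definition Phi :: "complex \<Rightarrow> complex" where
  "Phi z = (if Nf z \<le> 0 then -1 - cis (2 * pi * XX z) else 1 + cis (2 * pi * XX z))"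

lemma cos_pi_plus1: "cos (pi * (x + 1)) = - cos (pi * x)"
  by (simp add: distrib_left)

lemma gen_act_Pc: "gen_act (Pc x) = Pc (x + 1)"
  by (simp add: gen_act_def Pc_def complex_eq_iff cos_pi_plus1)

lemma gen_act_Qc: "gen_act (Qc x) = Qc (x + 1)"
  by (simp add: gen_act_def Qc_def complex_eq_iff cos_pi_plus1)

lemma orbit_Pc_nat: "orbit_Z (Pc (x + real n)) = orbit_Z (Pc x)"
proof (induction n)
  case (Suc n)
  have "Pc (x + real (Suc n)) = gen_act (Pc (x + real n))"
    by (simp add: gen_act_Pc algebra_simps)
  then show ?case using Suc by (simp add: orbit_gen_act)
qed simp

lemma orbit_Qc_nat: "orbit_Z (Qc (x + real n)) = orbit_Z (Qc x)"
proof (induction n)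
  case (Suc n)
  have "Qc (x + real (Suc n)) = gen_act (Qc (x + real n))"
    by (simp add: gen_act_Qc algebra_simps)
  then show ?case using Suc by (simp add: orbit_gen_act)
qed simp

lemma orbit_Pc_int: "orbit_Z (Pc (x + of_int k)) = orbit_Z (Pc x)"
proof (cases "k \<ge> 0")
  case True
  then have e: "x + of_int k = x + real (nat k)" by simp
  show ?thesis unfolding e by (rule orbit_Pc_nat)
next
  case False
  then have e: "(x + of_int k) + real (nat (-k)) = x" by simp
  have "orbit_Z (Pc ((x + of_int k) + real (nat (-k)))) = orbit_Z (Pc (x + of_int k))"
    by (rule orbit_Pc_nat)
  then show ?thesis unfolding e by (rule sym)
qed

lemma orbit_Qc_int: "orbit_Z (Qc (x + of_int k)) = orbit_Z (Qc x)"
proof (cases "k \<ge> 0")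
  case True
  then have e: "x + of_int k = x + real (nat k)" by simp
  show ?thesis unfolding e by (rule orbit_Qc_nat)
next
  case False
  then have e: "(x + of_int k) + real (nat (-k)) = x" by simp
  have "orbit_Z (Qc ((x + of_int k) + real (nat (-k)))) = orbit_Z (Qc (x + of_int k))"
    by (rule orbit_Qc_nat)
  then show ?thesis unfolding e by (rule sym)
qed

lemma sin_pi_plus1: "sin (pi * (x + 1)) = - sin (pi * x)"
  by (simp add: distrib_left)

lemma Dd_sigma: "Dd (1 + cnj z) = Dd z"
  by (simp add: Dd_def add.commute[of 1] sin_pi_plus1)

lemma hh_sigma: "hh (1 + cnj z) = hh z"
  unfolding hh_def Dd_sigma by (simp add: add.commute[of 1] sin_pi_plus1 cos_pi_plus1)

lemma XX_sigma: "XX (1 + cnj z) = XX z + 1"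
  by (simp add: XX_def hh_sigma)

lemma Nf_sigma: "Nf (1 + cnj z) = Nf z"
  by (simp add: Nf_def add.commute[of 1] cos_pi_plus1)

lemma rr_sigma: "rr (1 + cnj z) = 1 + cnj (rr z)"
proof -
  have "snd (Pc (XX z + 1)) = snd (gen_act (Pc (XX z)))" by (simp only: gen_act_Pc)
  then have 1: "snd (Pc (XX z + 1)) = 1 + cnj (snd (Pc (XX z)))" by (simp add: gen_act_def)
  have "snd (Qc (XX z + 1)) = snd (gen_act (Qc (XX z)))" by (simp only: gen_act_Qc)
  then have 2: "snd (Qc (XX z + 1)) = 1 + cnj (snd (Qc (XX z)))" by (simp add: gen_act_def)
  show ?thesis using 1 2 by (simp add: rr_def Nf_sigma XX_sigma)
qed

lemma cis_2pi_plus1: "cis (2 * pi * (x + 1)) = cis (2 * pi * x)"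
proof -
  have "cis (2 * pi * (x + 1)) = cis (2 * pi * x + 2 * pi)" by (simp add: distrib_left)
  also have "\<dots> = cis (2 * pi * x) * cis (2 * pi)" by (rule cis_mult[symmetric])
  also have "\<dots> = cis (2 * pi * x)" by simp
  finally show ?thesis .
qed

lemma Phi_sigma: "Phi (1 + cnj z) = Phi z"
  by (simp add: Phi_def Nf_sigma XX_sigma cis_2pi_plus1)

lemma Yset_iff: "z \<in> Yset \<longleftrightarrow> \<not> (Im z = 0 \<and> Re z \<in> \<int>)"
  by (simp add: Yset_def)

lemma Dd_pos: assumes "z \<in> Yset" shows "Dd z > 0"
proof (rule ccontr)
  assume "\<not> Dd z > 0"
  have nn: "(sin (pi * Re z))\<^sup>2 \<ge> 0" "(Im z)\<^sup>2 \<ge> 0" by simp_all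
  then have "(sin (pi * Re z))\<^sup>2 = 0" "(Im z)\<^sup>2 = 0" using \<open>\<not> Dd z > 0\<close> unfolding Dd_def by linarith+
  then have "sin (pi * Re z) = 0" "Im z = 0" by simp_all
  then obtain i :: int where "pi * Re z = of_int i * pi" using sin_zero_iff_int2 by blast
  then have "Re z = of_int i" by simp
  then have "Re z \<in> \<int>" by simp
  with \<open>Im z = 0\<close> assms show False by (simp add: Yset_def)
qed

lemma cos_XX: assumes "z \<in> Yset"
  shows "cos (pi * XX z) = cos (pi * Re z) * (Im z)\<^sup>2 / (Dd z * sqrt (1 + (hh z)\<^sup>2))"
proof -
  have D: "Dd z > 0" using Dd_pos[OF assms] .
  have sq: "sqrt (1 + (hh z)\<^sup>2) > 0" by (simp add: add_pos_nonneg)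
  have "pi * XX z = pi * Re z + arctan (hh z)" by (simp add: XX_def distrib_left)
  then have "cos (pi * XX z) = cos (pi * Re z) / sqrt (1 + (hh z)\<^sup>2) - sin (pi * Re z) * (hh z / sqrt (1 + (hh z)\<^sup>2))"
    by (simp add: cos_add cos_arctan sin_arctan)
  also have "\<dots> = (cos (pi * Re z) - sin (pi * Re z) * hh z) / sqrt (1 + (hh z)\<^sup>2)"
    by (simp add: diff_divide_distrib)
  also have "cos (pi * Re z) - sin (pi * Re z) * hh z = cos (pi * Re z) * (Im z)\<^sup>2 / Dd z"
  proof -
    have i: "cos (pi * Re z) * Dd z - sin (pi * Re z) * (sin (pi * Re z) * cos (pi * Re z)) = cos (pi * Re z) * (Im z)\<^sup>2"
      by (simp add: Dd_def algebra_simps power2_eq_square)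
    have "cos (pi * Re z) - sin (pi * Re z) * hh z = (cos (pi * Re z) * Dd z - sin (pi * Re z) * (sin (pi * Re z) * cos (pi * Re z))) / Dd z"
      using D unfolding hh_def by (simp add: diff_divide_distrib)
    then show ?thesis by (simp only: i)
  qed
  finally show ?thesis by simp
qed

lemma cos_int_half: assumes "cos (pi * x) = 0" shows "\<exists>n::int. x = of_int n + 1/2"
proof -
  obtain n :: int where "pi * x = of_int n * pi + pi / 2" using assms cos_zero_iff_int2 by blast
  then have "pi * x = pi * (of_int n + 1/2)" by (simp add: algebra_simps)
  then show ?thesis by auto
qed

lemma half_not_int: "of_int m \<noteq> (of_int n + 1/2 :: real)"
proof
  assume "of_int m = (of_int n + 1/2 :: real)"
  then have "(of_int (2*m) :: real) = of_int (2*n+1)" by simp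
  then have "2*m = 2*n+1" by linarith
  then show False by presburger
qed

lemma cos_XX_zero: assumes "z \<in> Yset" "Nf z = 0" shows "cos (pi * XX z) = 0"
proof -
  have "Im z * cos (pi * Re z) = 0" using assms(2) by (simp add: Nf_def)
  then show ?thesis using cos_XX[OF assms(1)] by auto
qed

lemma cos_XX_nonzero: assumes "z \<in> Yset" "Nf z \<noteq> 0" shows "cos (pi * XX z) \<noteq> 0"
proof -
  have "Im z \<noteq> 0" "cos (pi * Re z) \<noteq> 0" using assms(2) by (auto simp: Nf_def)
  moreover have "Dd z > 0" using Dd_pos[OF assms(1)] .
  moreover have "sqrt (1 + (hh z)\<^sup>2) > 0" by (simp add: add_pos_nonneg)
  ultimately show ?thesis using cos_XX[OF assms(1)] by simp
qed

lemma Re_rr: "Re (rr z) = XX z"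
  by (simp add: rr_def Pc_def Qc_def)

lemma Im_rr: "Im (rr z) = (if Nf z \<le> 0 then cos (pi * XX z) else - cos (pi * XX z))"
  by (simp add: rr_def Pc_def Qc_def)

lemma Im_rr_sign: assumes "z \<in> Yset" shows "Im (rr z) * Im z \<ge> 0"
proof -
  have D: "Dd z > 0" using Dd_pos[OF assms] .
  have sq: "sqrt (1 + (hh z)\<^sup>2) > 0" by (simp add: add_pos_nonneg)
  define k where "k = (Im z)\<^sup>2 / (Dd z * sqrt (1 + (hh z)\<^sup>2))"
  have k: "k \<ge> 0" unfolding k_def using D sq by simp
  have c: "cos (pi * XX z) = cos (pi * Re z) * k"
    unfolding k_def cos_XX[OF assms] by simp
  show ?thesis
  proof (cases "Nf z \<le> 0")
    case True
    then have "Im z * cos (pi * Re z) \<ge> 0" by (simp add: Nf_def)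
    then have "(Im z * cos (pi * Re z)) * k \<ge> 0" using k by simp
    moreover have "Im (rr z) = cos (pi * Re z) * k" by (simp add: Im_rr True c)
    ultimately show ?thesis by (simp add: mult.commute mult.left_commute)
  next
    case False
    then have "Im z * cos (pi * Re z) \<le> 0" by (simp add: Nf_def)
    then have "(Im z * cos (pi * Re z)) * k \<le> 0" using mult_nonpos_nonneg k by blast
    then have "- (Im z * cos (pi * Re z)) * k \<ge> 0" by simp
    moreover have "Im (rr z) = - (cos (pi * Re z) * k)" using False by (simp add: Im_rr c)
    ultimately show ?thesis by (simp add: mult.commute mult.left_commute)
  qed
qed

lemma XX_close: "\<bar>XX z - Re z\<bar> < 1/2"
proof -
  have "\<bar>arctan (hh z)\<bar> < pi/2" using arctan_bounded[of "hh z"] by linarith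
  moreover have "\<bar>arctan (hh z) / pi\<bar> = \<bar>arctan (hh z)\<bar> / pi" by simp
  ultimately have "\<bar>arctan (hh z) / pi\<bar> < 1/2" using pi_gt_zero by (simp add: divide_less_eq)
  then show ?thesis by (simp add: XX_def)
qed



lemma seg_Y:
  assumes z: "z \<in> Yset" and t: "0 \<le> t" "t \<le> 1"
  shows "complex_of_real (1 - t) * rr z + complex_of_real t * z \<in> Yset"
proof -
  define w where "w = complex_of_real (1 - t) * rr z + complex_of_real t * z"
  have Rew: "Re w = (1 - t) * XX z + t * Re z" by (simp add: w_def Re_rr)
  have Imw: "Im w = (1 - t) * Im (rr z) + t * Im z" by (simp add: w_def)
  have "\<not> (Im w = 0 \<and> Re w \<in> \<int>)"
  proof
    assume "Im w = 0 \<and> Re w \<in> \<int>"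
    then have I0: "Im w = 0" and "Re w \<in> \<int>" by auto
    then obtain m :: int where m: "Re w = of_int m" by (metis Ints_cases)
    show False
    proof (cases "Im z = 0")
      case False
      have s: "Im (rr z) * Im z \<ge> 0" using Im_rr_sign[OF z] .
      have "Im w * Im z = (1 - t) * (Im (rr z) * Im z) + t * (Im z)\<^sup>2"
        by (simp add: Imw algebra_simps power2_eq_square)
      then have e: "(1 - t) * (Im (rr z) * Im z) + t * (Im z)\<^sup>2 = 0" using I0 by simp
      have a: "(1 - t) * (Im (rr z) * Im z) \<ge> 0" using s t by simp
      have b: "t * (Im z)\<^sup>2 \<ge> 0" using t by simp
      have "t * (Im z)\<^sup>2 = 0" using a b e by linarith
      then have t0: "t = 0" using False by simp
      then have "Im (rr z) = 0" using I0 Imw by simp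
      then have "cos (pi * XX z) = 0" by (simp add: Im_rr split: if_splits)
      then obtain n :: int where n: "XX z = of_int n + 1/2" using cos_int_half by blast
      have "Re w = XX z" using Rew t0 by simp
      then show False using m n half_not_int by metis
    next
      case True
      then have "Nf z = 0" by (simp add: Nf_def)
      then have "cos (pi * XX z) = 0" using cos_XX_zero[OF z] by simp
      then obtain n :: int where n: "XX z = of_int n + 1/2" using cos_int_half by blast
      have close: "\<bar>XX z - Re z\<bar> < 1/2" by (rule XX_close)
      have "Re w - XX z = t * (Re z - XX z)" using Rew by (simp add: algebra_simps)
      then have "\<bar>Re w - XX z\<bar> = t * \<bar>Re z - XX z\<bar>" using t by (simp add: abs_mult)
      also have "\<dots> \<le> \<bar>Re z - XX z\<bar>" using t mult_right_le_one_le[of "\<bar>Re z - XX z\<bar>" t] by (simp add: mult.commute)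
      also have "\<dots> < 1/2" using close by linarith
      finally have "\<bar>of_int m - (of_int n + 1/2)\<bar> < (1/2::real)" using m n by simp
      then have "\<bar>of_int (m - n) - 1/2\<bar> < (1/2::real)" by (simp add: algebra_simps)
      then have "0 < (of_int (m - n)::real)" "(of_int (m - n)::real) < 1" by linarith+
      then have "0 < m - n" "m - n < 1" by linarith+
      then show False by linarith
    qed
  qed
  then show ?thesis unfolding w_def[symmetric] by (simp add: Yset_def)
qed

lemma rr_in_Y: "z \<in> Yset \<Longrightarrow> rr z \<in> Yset"
  using seg_Y[of z 0] by simp

lemma cis_cos0: assumes "cos (pi * x) = 0" shows "cis (2 * pi * x) = -1"
proof -
  have s: "(sin (pi * x))\<^sup>2 = 1" using assms sin_cos_squared_add[of "pi * x"] by simp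
  have "cos (2 * (pi * x)) = -1" using assms by (simp add: cos_double_cos)
  moreover have "sin (2 * (pi * x)) = 0" using assms by (simp add: sin_double)
  ultimately show ?thesis by (simp add: complex_eq_iff mult.assoc)
qed

lemma cont_Dd: "continuous_on S Dd"
  unfolding Dd_def by (intro continuous_intros)

lemma cont_hh: "continuous_on Yset hh"
proof -
  have "continuous_on Yset (\<lambda>z. sin (pi * Re z) * cos (pi * Re z) / Dd z)"
    by (intro continuous_intros cont_Dd) (use Dd_pos in force)
  then show ?thesis unfolding hh_def[abs_def] .
qed

lemma cont_XX: "continuous_on Yset XX"
proof -
  have "continuous_on Yset (\<lambda>z. Re z + arctan (hh z) / pi)"
    by (intro continuous_intros continuous_on_compose2[OF continuous_on_arctan cont_hh]) auto
  then show ?thesis unfolding XX_def[abs_def] .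
qed

lemma cont_XXc: "continuous_on Yset (\<lambda>z. f (XX z))" if "continuous_on UNIV f"
  using continuous_on_compose2[OF that cont_XX] by auto

lemma cont_Nf: "continuous_on S Nf"
  unfolding Nf_def[abs_def] by (intro continuous_intros)

lemma rr_eq: "rr = (\<lambda>z. if Nf z \<le> 0 then complex_of_real (XX z) + \<i> * complex_of_real (cos (pi * XX z))
     else complex_of_real (XX z) - \<i> * complex_of_real (cos (pi * XX z)))"
  by (auto simp: rr_def Pc_def Qc_def fun_eq_iff)

lemma cont_rr: "continuous_on Yset rr"
proof -
  have c1: "continuous_on Yset (\<lambda>z. complex_of_real (XX z) + \<i> * complex_of_real (cos (pi * XX z)))"
    by (intro continuous_intros cont_XXc) 
  have c2: "continuous_on Yset (\<lambda>z. complex_of_real (XX z) - \<i> * complex_of_real (cos (pi * XX z)))"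
    by (intro continuous_intros cont_XXc)
  show ?thesis unfolding rr_eq
    by (rule continuous_on_cases_le[OF continuous_on_subset[OF c1] continuous_on_subset[OF c2] cont_Nf])
       (auto simp: cos_XX_zero)
qed

lemma cont_Phi: "continuous_on Yset Phi"
proof -
  have c1: "continuous_on Yset (\<lambda>z. -1 - cis (2 * pi * XX z))"
    by (intro continuous_intros cont_XXc)
  have c2: "continuous_on Yset (\<lambda>z. 1 + cis (2 * pi * XX z))"
    by (intro continuous_intros cont_XXc)
  show ?thesis unfolding Phi_def[abs_def]
    by (rule continuous_on_cases_le[OF continuous_on_subset[OF c1] continuous_on_subset[OF c2] cont_Nf])
       (auto simp: cos_XX_zero cis_cos0)
qed



definition Wset :: "complex set" where "Wset = sphere (-1) 1 \<union> sphere 1 1"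

lemma W_top: "wedge_two_circles = top_of_set Wset"
  by (simp add: wedge_two_circles_def Wset_def)

lemma cmod_eq1: "cmod w = 1 \<longleftrightarrow> (Re w)\<^sup>2 + (Im w)\<^sup>2 = 1"
proof
  assume "cmod w = 1" then show "(Re w)\<^sup>2 + (Im w)\<^sup>2 = 1" using cmod_power2[of w] by simp
next
  assume h: "(Re w)\<^sup>2 + (Im w)\<^sup>2 = 1"
  then have "(cmod w)\<^sup>2 = 1\<^sup>2" using cmod_power2[of w] by simp
  then show "cmod w = 1" using norm_ge_zero power2_eq_iff_nonneg by (metis zero_le_one)
qed

lemma in_Wset: "u \<in> Wset \<longleftrightarrow> cmod (u + 1) = 1 \<or> cmod (u - 1) = 1"
  by (simp add: Wset_def dist_norm norm_minus_commute[of "-1" u] norm_minus_commute[of 1 u])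

lemma W_L: assumes "u \<in> Wset" "Re u \<le> 0" shows "cmod (u + 1) = 1"
proof -
  { assume h: "cmod (u - 1) = 1"
    then have "(Re u - 1)\<^sup>2 + (Im u)\<^sup>2 = 1" using cmod_eq1[of "u - 1"] by simp
    moreover have "(Re u - 1)\<^sup>2 = (Re u)\<^sup>2 - 2 * Re u + 1" by (simp add: power2_eq_square algebra_simps)
    ultimately have e: "(Re u)\<^sup>2 + (Im u)\<^sup>2 - 2 * Re u = 0" by linarith
    have "(Re u)\<^sup>2 \<ge> 0" "(Im u)\<^sup>2 \<ge> 0" by simp_all
    then have "(Re u)\<^sup>2 = 0" "(Im u)\<^sup>2 = 0" using e assms(2) by linarith+
    then have "Re u = 0 \<and> Im u = 0" by simp
    then have "u = 0" by (simp add: complex_eq_iff)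
    then have ?thesis by simp }
  then show ?thesis using assms(1) in_Wset by blast
qed

lemma W_R: assumes "u \<in> Wset" "Re u \<ge> 0" shows "cmod (u - 1) = 1"
proof -
  { assume h: "cmod (u + 1) = 1"
    then have "(Re u + 1)\<^sup>2 + (Im u)\<^sup>2 = 1" using cmod_eq1[of "u + 1"] by simp
    moreover have "(Re u + 1)\<^sup>2 = (Re u)\<^sup>2 + 2 * Re u + 1" by (simp add: power2_eq_square algebra_simps)
    ultimately have e: "(Re u)\<^sup>2 + (Im u)\<^sup>2 + 2 * Re u = 0" by linarith
    have "(Re u)\<^sup>2 \<ge> 0" "(Im u)\<^sup>2 \<ge> 0" by simp_all
    then have "(Re u)\<^sup>2 = 0" "(Im u)\<^sup>2 = 0" using e assms(2) by linarith+
    then have "Re u = 0 \<and> Im u = 0" by simp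
    then have "u = 0" by (simp add: complex_eq_iff)
    then have ?thesis by simp }
  then show ?thesis using assms(1) in_Wset by blast
qed

lemma W_Re0: assumes "u \<in> Wset" "Re u = 0" shows "u = 0"
proof -
  have "cmod (u + 1) = 1" using W_L assms by simp
  then have "(Re u + 1)\<^sup>2 + (Im u)\<^sup>2 = 1" using cmod_eq1[of "u + 1"] by simp
  then have "Im u = 0" using assms(2) by simp
  then show ?thesis using assms(2) by (simp add: complex_eq_iff)
qed

lemma circle_param:
  assumes "cmod w = 1"
  shows "\<bar>Re w\<bar> \<le> 1" "0 \<le> Im w \<Longrightarrow> Im w = sqrt (1 - (Re w)\<^sup>2)"
        "Im w < 0 \<Longrightarrow> Im w = - sqrt (1 - (Re w)\<^sup>2)"
proof -
  have e: "(Re w)\<^sup>2 + (Im w)\<^sup>2 = 1" using assms cmod_eq1 by blast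
  then show "\<bar>Re w\<bar> \<le> 1" by (metis abs_Re_le_cmod assms)
  have i: "(Im w)\<^sup>2 = 1 - (Re w)\<^sup>2" using e by simp
  show "0 \<le> Im w \<Longrightarrow> Im w = sqrt (1 - (Re w)\<^sup>2)" using i by (metis real_sqrt_unique)
  show "Im w < 0 \<Longrightarrow> Im w = - sqrt (1 - (Re w)\<^sup>2)"
    using i by (metis less_eq_real_def neg_0_le_iff_le power2_minus real_sqrt_unique minus_minus)
qed

definition gW :: "complex \<Rightarrow> (real \<times> complex) set" where
  "gW u = (if Re u \<le> 0 then
             (if 0 \<le> Im u then orbit_Z (Pc (arccos (Re u + 1) / (2 * pi) - 1/2))
              else orbit_Z (Pc (- arccos (Re u + 1) / (2 * pi) - 1/2)))
           else
             (if 0 \<le> Im u then orbit_Z (Qc (arccos (Re u - 1) / (2 * pi)))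
              else orbit_Z (Qc (- arccos (Re u - 1) / (2 * pi)))))"

lemma gL: assumes "u \<in> Wset" "Re u \<le> 0"
  shows "\<exists>x. gW u = orbit_Z (Pc x) \<and> u + 1 = - cis (2 * pi * x)"
proof -
  have m: "cmod (u + 1) = 1" using W_L assms .
  define c where "c = Re u + 1"
  have cb: "-1 \<le> c" "c \<le> 1" using circle_param(1)[OF m] by (auto simp: c_def)
  show ?thesis
  proof (cases "0 \<le> Im u")
    case True
    define x where "x = arccos c / (2 * pi) - 1/2"
    have g: "gW u = orbit_Z (Pc x)" using assms True by (simp add: gW_def x_def c_def)
    have tx: "2 * pi * x = arccos c - pi" by (simp add: x_def field_simps)
    have "Im u = sqrt (1 - c\<^sup>2)" using circle_param(2)[OF m] True by (simp add: c_def)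
    then have "u + 1 = - cis (2 * pi * x)"
      using cb by (simp add: tx complex_eq_iff c_def sin_arccos)
    then show ?thesis using g by blast
  next
    case False
    define x where "x = - arccos c / (2 * pi) - 1/2"
    have g: "gW u = orbit_Z (Pc x)" using assms False by (simp add: gW_def x_def c_def)
    have tx: "2 * pi * x = - arccos c - pi" by (simp add: x_def field_simps)
    have "Im u = - sqrt (1 - c\<^sup>2)" using circle_param(3)[OF m] False by (simp add: c_def)
    then have "u + 1 = - cis (2 * pi * x)"
      using cb by (simp add: tx complex_eq_iff c_def sin_arccos)
    then show ?thesis using g by blast
  qed
qed

lemma gR: assumes "u \<in> Wset" "Re u > 0"
  shows "\<exists>x. gW u = orbit_Z (Qc x) \<and> u - 1 = cis (2 * pi * x)"
proof -
  have m: "cmod (u - 1) = 1" using W_R assms by simp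
  define c where "c = Re u - 1"
  have cb: "-1 \<le> c" "c \<le> 1" using circle_param(1)[OF m] by (auto simp: c_def)
  show ?thesis
  proof (cases "0 \<le> Im u")
    case True
    define x where "x = arccos c / (2 * pi)"
    have g: "gW u = orbit_Z (Qc x)" using assms True by (simp add: gW_def x_def c_def)
    have tx: "2 * pi * x = arccos c" by (simp add: x_def field_simps)
    have "Im u = sqrt (1 - c\<^sup>2)" using circle_param(2)[OF m] True by (simp add: c_def)
    then have "u - 1 = cis (2 * pi * x)"
      using cb by (simp add: tx complex_eq_iff c_def sin_arccos)
    then show ?thesis using g by blast
  next
    case False
    define x where "x = - arccos c / (2 * pi)"
    have g: "gW u = orbit_Z (Qc x)" using assms False by (simp add: gW_def x_def c_def)
    have tx: "2 * pi * x = - arccos c" by (simp add: x_def field_simps)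
    have "Im u = - sqrt (1 - c\<^sup>2)" using circle_param(3)[OF m] False by (simp add: c_def)
    then have "u - 1 = cis (2 * pi * x)"
      using cb by (simp add: tx complex_eq_iff c_def sin_arccos)
    then show ?thesis using g by blast
  qed
qed

lemma cis_eq_shift: assumes "cis (2 * pi * x) = cis (2 * pi * y)" shows "\<exists>n::int. x = y + of_int n"
proof -
  have "sin (2 * pi * x) = sin (2 * pi * y) \<and> cos (2 * pi * x) = cos (2 * pi * y)"
    using assms by (simp add: complex_eq_iff)
  then obtain n :: int where "2 * pi * x = 2 * pi * y + 2 * pi * of_int n" using sin_cos_eq_iff by blast
  then have "2 * pi * x = 2 * pi * (y + of_int n)" by (simp add: algebra_simps)
  then show ?thesis by auto
qed

lemma Phi_in_W: "Phi z \<in> Wset"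
  unfolding in_Wset Phi_def by auto

lemma consistency:
  assumes z: "z \<in> Yset"
  shows "gW (Phi z) = orbit_Z (XX z, rr z)"
proof (cases "Nf z \<le> 0")
  case True
  then have P: "Phi z = -1 - cis (2 * pi * XX z)" by (simp add: Phi_def)
  have "Re (Phi z) \<le> 0" unfolding P using cos_le_one[of "2 * pi * XX z"] by simp
  then obtain x where x: "gW (Phi z) = orbit_Z (Pc x)" "Phi z + 1 = - cis (2 * pi * x)"
    using gL Phi_in_W by blast
  then have "cis (2 * pi * x) = cis (2 * pi * XX z)" using P by simp
  then obtain n :: int where "x = XX z + of_int n" using cis_eq_shift by blast
  then have "gW (Phi z) = orbit_Z (Pc (XX z))" using x orbit_Pc_int by simp
  moreover have "Pc (XX z) = (XX z, rr z)" using True by (simp add: rr_def Pc_def)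
  ultimately show ?thesis by simp
next
  case False
  then have P: "Phi z = 1 + cis (2 * pi * XX z)" by (simp add: Phi_def)
  have c0: "cos (pi * XX z) \<noteq> 0" using cos_XX_nonzero[OF z] False by simp
  have "cos (2 * pi * XX z) = 2 * (cos (pi * XX z))\<^sup>2 - 1"
    using cos_double_cos[of "pi * XX z"] by (simp add: mult.assoc)
  moreover have "(cos (pi * XX z))\<^sup>2 > 0" using c0 by simp
  ultimately have "Re (Phi z) > 0" unfolding P by simp
  then obtain x where x: "gW (Phi z) = orbit_Z (Qc x)" "Phi z - 1 = cis (2 * pi * x)"
    using gR Phi_in_W by blast
  then have "cis (2 * pi * x) = cis (2 * pi * XX z)" using P by simp
  then obtain n :: int where "x = XX z + of_int n" using cis_eq_shift by blast
  then have "gW (Phi z) = orbit_Z (Qc (XX z))" using x orbit_Qc_int by simp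
  moreover have "Qc (XX z) = (XX z, rr z)" using False by (simp add: rr_def Qc_def)
  ultimately show ?thesis by simp
qed



abbreviation X0 :: "(real \<times> complex) topology" where "X0 \<equiv> top_of_set (UNIV \<times> Yset)"

lemma qmap: "quotient_map X0 Gamma_S1 orbit_Z"
  unfolding Gamma_S1_def by (rule quotient_map_quot)

lemma cont_q: "continuous_map X0 Gamma_S1 orbit_Z"
  by (rule quotient_imp_continuous_map[OF qmap])

lemma topspace_Gamma: "topspace Gamma_S1 = orbit_Z ` (UNIV \<times> Yset)"
  unfolding Gamma_S1_def topspace_quot by simp

definition fG :: "(real \<times> complex) set \<Rightarrow> complex" where
  "fG Ob = Phi (snd (SOME p. p \<in> Ob))"

lemma snd_gen_act: "snd (gen_act p) = 1 + cnj (snd p)"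
  by (simp add: gen_act_def)

lemma fG_q: "fG (orbit_Z p) = Phi (snd p)"
  unfolding fG_def
  by (rule invariant_some[where F="\<lambda>p. Phi (snd p)"]) (simp add: snd_gen_act Phi_sigma)

lemma cont_f: "continuous_map Gamma_S1 wedge_two_circles fG"
proof (rule continuous_compose_quotient_map[OF qmap])
  have e: "fG \<circ> orbit_Z = Phi \<circ> snd" by (simp add: fun_eq_iff fG_q)
  have c: "continuous_on (UNIV \<times> Yset) (Phi \<circ> snd)"
  proof (rule continuous_on_compose[OF continuous_on_snd[OF continuous_on_id]])
    have "snd ` (UNIV \<times> Yset) = Yset" by auto
    then show "continuous_on (snd ` (UNIV \<times> Yset)) Phi" by (simp add: cont_Phi)
  qed
  show "continuous_map X0 wedge_two_circles (fG \<circ> orbit_Z)"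
    unfolding e W_top using c Phi_in_W by auto
qed

lemma Pc_Y: "snd (Pc x) \<in> Yset"
proof -
  { assume "cos (pi * x) = 0" "x \<in> \<int>"
    then obtain n :: int where "x = of_int n + 1/2" using cos_int_half by blast
    moreover obtain m :: int where "x = of_int m" using \<open>x \<in> \<int>\<close> Ints_cases by blast
    ultimately have False using half_not_int by metis }
  then show ?thesis by (auto simp: Pc_def Yset_def)
qed

lemma Qc_Y: "snd (Qc x) \<in> Yset"
proof -
  { assume "cos (pi * x) = 0" "x \<in> \<int>"
    then obtain n :: int where "x = of_int n + 1/2" using cos_int_half by blast
    moreover obtain m :: int where "x = of_int m" using \<open>x \<in> \<int>\<close> Ints_cases by blast
    ultimately have False using half_not_int by metis }
  then show ?thesis by (auto simp: Qc_def Yset_def)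
qed

lemma cont_Pc: "continuous_on S Pc"
  unfolding Pc_def[abs_def] by (intro continuous_intros)

lemma cont_Qc: "continuous_on S Qc"
  unfolding Qc_def[abs_def] by (intro continuous_intros)

lemma cont_leafP: assumes "continuous_on S e"
  shows "continuous_map (top_of_set S) Gamma_S1 (\<lambda>u. orbit_Z (Pc (e u)))"
proof -
  have "continuous_map (top_of_set S) X0 (\<lambda>u. Pc (e u))"
    using continuous_on_compose2[OF cont_Pc assms, of UNIV] Pc_Y
    by (auto simp: Pc_def)
  then have "continuous_map (top_of_set S) Gamma_S1 (orbit_Z \<circ> (\<lambda>u. Pc (e u)))"
    by (rule continuous_map_compose[OF _ cont_q])
  then show ?thesis by (simp add: o_def)
qed

lemma cont_leafQ: assumes "continuous_on S e"
  shows "continuous_map (top_of_set S) Gamma_S1 (\<lambda>u. orbit_Z (Qc (e u)))"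
proof -
  have "continuous_map (top_of_set S) X0 (\<lambda>u. Qc (e u))"
    using continuous_on_compose2[OF cont_Qc assms, of UNIV] Qc_Y
    by (auto simp: Qc_def)
  then have "continuous_map (top_of_set S) Gamma_S1 (orbit_Z \<circ> (\<lambda>u. Qc (e u)))"
    by (rule continuous_map_compose[OF _ cont_q])
  then show ?thesis by (simp add: o_def)
qed

definition SL where "SL = {u \<in> Wset. Re u \<le> 0}"
definition SR where "SR = {u \<in> Wset. 0 \<le> Re u}"

lemma SL_bound: "u \<in> SL \<Longrightarrow> -1 \<le> Re u + 1 \<and> Re u + 1 \<le> 1"
  using circle_param(1)[OF W_L[of u]] by (auto simp: SL_def)

lemma SR_bound: "u \<in> SR \<Longrightarrow> -1 \<le> Re u - 1 \<and> Re u - 1 \<le> 1"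
  using circle_param(1)[OF W_R[of u]] by (auto simp: SR_def)

lemma cmod_real1: assumes "cmod w = 1" "Im w = 0" shows "Re w = 1 \<or> Re w = -1"
proof -
  have "(Re w)\<^sup>2 = 1" using assms cmod_eq1 by simp
  then show ?thesis by (simp add: power2_eq_1_iff)
qed

lemma orbit_Pc_1: "orbit_Z (Pc (x + 1)) = orbit_Z (Pc x)"
  using orbit_Pc_int[of x 1] by simp

lemma orbit_Qc_1: "orbit_Z (Qc (x + 1)) = orbit_Z (Qc x)"
  using orbit_Qc_int[of x 1] by simp

lemma contA: "continuous_map (top_of_set SL) Gamma_S1
   (\<lambda>u. if 0 \<le> Im u then orbit_Z (Pc (arccos (Re u + 1) / (2 * pi) - 1/2))
        else orbit_Z (Pc (- arccos (Re u + 1) / (2 * pi) - 1/2)))"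
proof (rule continuous_map_cases_le[where p="\<lambda>x. 0" and q=Im])
  have c1: "continuous_on SL (\<lambda>u. arccos (Re u + 1) / (2 * pi) - 1/2)"
    by (intro continuous_intros) (auto dest: SL_bound)
  have c2: "continuous_on SL (\<lambda>u. - arccos (Re u + 1) / (2 * pi) - 1/2)"
    by (intro continuous_intros) (auto dest: SL_bound)
  show "continuous_map (subtopology (top_of_set SL) {x \<in> topspace (top_of_set SL). 0 \<le> Im x}) Gamma_S1
      (\<lambda>u. orbit_Z (Pc (arccos (Re u + 1) / (2 * pi) - 1/2)))"
    by (rule continuous_map_from_subtopology, rule cont_leafP) (rule c1)
  show "continuous_map (subtopology (top_of_set SL) {x \<in> topspace (top_of_set SL). Im x \<le> 0}) Gamma_S1
      (\<lambda>u. orbit_Z (Pc (- arccos (Re u + 1) / (2 * pi) - 1/2)))"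
    by (rule continuous_map_from_subtopology, rule cont_leafP) (rule c2)
  fix u assume u: "u \<in> topspace (top_of_set SL)" "0 = Im u"
  then have "cmod (u + 1) = 1" using W_L by (auto simp: SL_def)
  then have "Re u + 1 = 1 \<or> Re u + 1 = -1" using cmod_real1[of "u + 1"] u by simp
  then show "orbit_Z (Pc (arccos (Re u + 1) / (2 * pi) - 1/2)) = orbit_Z (Pc (- arccos (Re u + 1) / (2 * pi) - 1/2))"
  proof
    assume "Re u + 1 = 1" then show ?thesis by simp
  next
    assume h: "Re u + 1 = -1"
    have "arccos (Re u + 1) = pi" unfolding h by (rule arccos_minus_1)
    then show ?thesis using orbit_Pc_1[of "-1"] by simp
  qed
qed (auto intro: continuous_intros)

lemma contB: "continuous_map (top_of_set SR) Gamma_S1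
   (\<lambda>u. if 0 \<le> Im u then orbit_Z (Qc (arccos (Re u - 1) / (2 * pi)))
        else orbit_Z (Qc (- arccos (Re u - 1) / (2 * pi))))"
proof (rule continuous_map_cases_le[where p="\<lambda>x. 0" and q=Im])
  have c1: "continuous_on SR (\<lambda>u. arccos (Re u - 1) / (2 * pi))"
    by (intro continuous_intros) (auto dest: SR_bound)
  have c2: "continuous_on SR (\<lambda>u. - arccos (Re u - 1) / (2 * pi))"
    by (intro continuous_intros) (auto dest: SR_bound)
  show "continuous_map (subtopology (top_of_set SR) {x \<in> topspace (top_of_set SR). 0 \<le> Im x}) Gamma_S1
      (\<lambda>u. orbit_Z (Qc (arccos (Re u - 1) / (2 * pi))))"
    by (rule continuous_map_from_subtopology, rule cont_leafQ) (rule c1)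
  show "continuous_map (subtopology (top_of_set SR) {x \<in> topspace (top_of_set SR). Im x \<le> 0}) Gamma_S1
      (\<lambda>u. orbit_Z (Qc (- arccos (Re u - 1) / (2 * pi))))"
    by (rule continuous_map_from_subtopology, rule cont_leafQ) (rule c2)
  fix u assume u: "u \<in> topspace (top_of_set SR)" "0 = Im u"
  then have "cmod (u - 1) = 1" using W_R by (auto simp: SR_def)
  then have "Re u - 1 = 1 \<or> Re u - 1 = -1" using cmod_real1[of "u - 1"] u by simp
  then show "orbit_Z (Qc (arccos (Re u - 1) / (2 * pi))) = orbit_Z (Qc (- arccos (Re u - 1) / (2 * pi)))"
  proof
    assume "Re u - 1 = 1" then show ?thesis by simp
  next
    assume h: "Re u - 1 = -1"
    have "arccos (Re u - 1) = pi" unfolding h by (rule arccos_minus_1)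
    then show ?thesis using orbit_Qc_1[of "-1/2"] by simp
  qed
qed (auto intro: continuous_intros)

lemma Pc_half: "Pc (1/2) = Qc (1/2)"
  by (simp add: Pc_def Qc_def)

lemma cont_g: "continuous_map wedge_two_circles Gamma_S1 gW"
  unfolding W_top gW_def[abs_def]
proof (rule continuous_map_cases_le[where p=Re and q="\<lambda>x. 0"])
  have eL: "subtopology (top_of_set Wset) {x \<in> topspace (top_of_set Wset). Re x \<le> 0} = top_of_set SL"
    by (simp add: subtopology_subtopology SL_def Int_def conj_commute)
  have eR: "subtopology (top_of_set Wset) {x \<in> topspace (top_of_set Wset). 0 \<le> Re x} = top_of_set SR"
    by (simp add: subtopology_subtopology SR_def Int_def conj_commute)
  show "continuous_map (subtopology (top_of_set Wset) {x \<in> topspace (top_of_set Wset). Re x \<le> 0}) Gamma_S1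
     (\<lambda>u. if 0 \<le> Im u then orbit_Z (Pc (arccos (Re u + 1) / (2 * pi) - 1/2))
        else orbit_Z (Pc (- arccos (Re u + 1) / (2 * pi) - 1/2)))"
    unfolding eL by (rule contA)
  show "continuous_map (subtopology (top_of_set Wset) {x \<in> topspace (top_of_set Wset). 0 \<le> Re x}) Gamma_S1
     (\<lambda>u. if 0 \<le> Im u then orbit_Z (Qc (arccos (Re u - 1) / (2 * pi)))
        else orbit_Z (Qc (- arccos (Re u - 1) / (2 * pi))))"
    unfolding eR by (rule contB)
  fix u assume u: "u \<in> topspace (top_of_set Wset)" "Re u = 0"
  then have "u = 0" using W_Re0 by simp
  then show "(if 0 \<le> Im u then orbit_Z (Pc (arccos (Re u + 1) / (2 * pi) - 1/2))
        else orbit_Z (Pc (- arccos (Re u + 1) / (2 * pi) - 1/2))) =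
     (if 0 \<le> Im u then orbit_Z (Qc (arccos (Re u - 1) / (2 * pi)))
        else orbit_Z (Qc (- arccos (Re u - 1) / (2 * pi))))"
    using orbit_Pc_1[of "-1/2"] Pc_half by simp
qed (auto intro: continuous_intros)



definition HW :: "real \<times> complex \<Rightarrow> complex" where
  "HW p = (if Re (snd p) \<le> 0
           then -1 + (snd p + 1) * cis (2 * (1 - fst p) * arctan (- Im (snd p) / 2))
           else 1 + (snd p - 1) * cis (2 * (1 - fst p) * arctan (Im (snd p) / 2)))"

lemma hh_on_curve: "hh (complex_of_real x + \<i> * complex_of_real c) = sin (pi * x) * cos (pi * x)"
  if "c = cos (pi * x) \<or> c = - cos (pi * x)"
  using that by (auto simp: hh_def Dd_def)

lemma Phi_alt: assumes "z \<in> Yset" "Nf z \<ge> 0" shows "Phi z = 1 + cis (2 * pi * XX z)"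
proof (cases "Nf z = 0")
  case True
  then have "cis (2 * pi * XX z) = -1" using cos_XX_zero[OF assms(1)] cis_cos0 by simp
  then show ?thesis by (simp add: Phi_def)
next
  case False then show ?thesis using assms(2) by (simp add: Phi_def)
qed

lemma sc_sin2: "sin (pi * x) * cos (pi * x) = sin (2 * pi * x) / 2"
  using sin_double[of "pi * x"] by (simp add: mult.assoc)

lemma fg_eq: assumes u: "u \<in> Wset" shows "fG (gW u) = HW (0, u)"
proof (cases "Re u \<le> 0")
  case True
  obtain x where x: "gW u = orbit_Z (Pc x)" "u + 1 = - cis (2 * pi * x)" using gL[OF u True] by blast
  define z where "z = snd (Pc x)"
  have z: "z = complex_of_real x + \<i> * complex_of_real (cos (pi * x))" by (simp add: z_def Pc_def)
  have N: "Nf z \<le> 0" by (simp add: z Nf_def)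
  have ReZ: "Re z = x" by (simp add: z)
  have H: "hh z = sin (pi * x) * cos (pi * x)" unfolding z by (rule hh_on_curve) simp
  have ImU: "Im u = - sin (2 * pi * x)" using arg_cong[OF x(2), of Im] by simp
  have H2: "hh z = - Im u / 2" using H sc_sin2[of x] ImU by simp
  have "2 * pi * XX z = 2 * pi * x + 2 * arctan (- Im u / 2)"
    unfolding XX_def ReZ H2 by (simp add: field_simps)
  then have "cis (2 * pi * XX z) = cis (2 * pi * x) * cis (2 * arctan (- Im u / 2))"
    by (simp add: cis_mult)
  then have "Phi z = -1 + (u + 1) * cis (2 * arctan (- Im u / 2))"
    using N x(2) by (simp add: Phi_def)
  then show ?thesis using True x(1) by (simp add: fG_q HW_def z_def)
next
  case False
  then have Rp: "Re u > 0" by simp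
  obtain x where x: "gW u = orbit_Z (Qc x)" "u - 1 = cis (2 * pi * x)" using gR[OF u Rp] by blast
  define z where "z = snd (Qc x)"
  have z: "z = complex_of_real x + \<i> * complex_of_real (- cos (pi * x))" by (simp add: z_def Qc_def)
  have zY: "z \<in> Yset" unfolding z_def by (rule Qc_Y)
  have N: "Nf z \<ge> 0" by (simp add: z Nf_def)
  have ReZ: "Re z = x" by (simp add: z)
  have H: "hh z = sin (pi * x) * cos (pi * x)" unfolding z by (rule hh_on_curve) simp
  have ImU: "Im u = sin (2 * pi * x)" using arg_cong[OF x(2), of Im] by simp
  have H2: "hh z = Im u / 2" using H sc_sin2[of x] ImU by simp
  have "2 * pi * XX z = 2 * pi * x + 2 * arctan (Im u / 2)"
    unfolding XX_def ReZ H2 by (simp add: field_simps)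
  then have "cis (2 * pi * XX z) = cis (2 * pi * x) * cis (2 * arctan (Im u / 2))"
    by (simp add: cis_mult)
  then have "Phi z = 1 + (u - 1) * cis (2 * arctan (Im u / 2))"
    using Phi_alt[OF zY N] x(2) by simp
  then show ?thesis using False x(1) by (simp add: fG_q HW_def z_def)
qed

lemma HW_in: assumes "u \<in> Wset" shows "HW (t, u) \<in> Wset"
proof (cases "Re u \<le> 0")
  case True
  then have "cmod (HW (t, u) + 1) = 1" using W_L[OF assms True] by (simp add: HW_def norm_mult)
  then show ?thesis by (simp add: in_Wset)
next
  case False
  then have "cmod (HW (t, u) - 1) = 1" using W_R[OF assms] by (simp add: HW_def norm_mult)
  then show ?thesis by (simp add: in_Wset)
qed

lemma cont_HW: "continuous_on ({0..1} \<times> Wset) HW"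
proof -
  have c1: "continuous_on ({0..1} \<times> Wset) (\<lambda>p. -1 + (snd p + 1) * cis (2 * (1 - fst p) * arctan (- Im (snd p) / 2)))"
    by (intro continuous_intros) auto
  have c2: "continuous_on ({0..1} \<times> Wset) (\<lambda>p. 1 + (snd p - 1) * cis (2 * (1 - fst p) * arctan (Im (snd p) / 2)))"
    by (intro continuous_intros) auto
  show ?thesis unfolding HW_def[abs_def]
  proof (rule continuous_on_cases_le[OF continuous_on_subset[OF c1] continuous_on_subset[OF c2]])
    show "continuous_on ({0..1} \<times> Wset) (\<lambda>p. Re (snd p))" by (intro continuous_intros)
    fix p assume "p \<in> {0..1::real} \<times> Wset" "Re (snd p) = 0"
    then have "snd p = 0" using W_Re0 by auto
    then show "-1 + (snd p + 1) * cis (2 * (1 - fst p) * arctan (- Im (snd p) / 2)) =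
               1 + (snd p - 1) * cis (2 * (1 - fst p) * arctan (Im (snd p) / 2))" by simp
  qed auto
qed

lemma hom_W: "homotopic_with (\<lambda>x. True) wedge_two_circles wedge_two_circles (fG \<circ> gW) id"
proof -
  have "continuous_map (prod_topology (top_of_set {0..1}) (top_of_set Wset)) (top_of_set Wset) HW"
    using cont_HW HW_in by auto
  moreover have "\<forall>x\<in>Wset. HW (0, x) = (fG \<circ> gW) x" using fg_eq by simp
  moreover have "\<forall>x\<in>Wset. HW (1, x) = id x" by (simp add: HW_def)
  ultimately show ?thesis unfolding W_top
    by (subst homotopic_with) (auto intro!: exI[of _ HW])
qed

definition ht :: "real \<times> (real \<times> complex) \<Rightarrow> real \<times> complex" where
  "ht q = ((1 - fst q) * XX (snd (snd q)) + fst q * fst (snd q),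
           complex_of_real (1 - fst q) * rr (snd (snd q)) + complex_of_real (fst q) * snd (snd q))"

lemma ht_equiv: "ht (t, gen_act p) = gen_act (ht (t, p))"
  by (simp add: ht_def gen_act_def XX_sigma rr_sigma complex_eq_iff algebra_simps)

definition HG :: "real \<times> (real \<times> complex) set \<Rightarrow> (real \<times> complex) set" where
  "HG q = orbit_Z (ht (fst q, SOME p. p \<in> snd q))"

lemma HG_q: "HG (t, orbit_Z p) = orbit_Z (ht (t, p))"
  unfolding HG_def
  by (simp, rule invariant_some[where F="\<lambda>p. orbit_Z (ht (t, p))"]) (simp add: ht_equiv orbit_gen_act)

lemma cont_ht: "continuous_map (top_of_set ({0..1} \<times> (UNIV \<times> Yset))) X0 ht"
proof -
  let ?S = "{0..1::real} \<times> (UNIV \<times> Yset)"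
  have cX: "continuous_on ?S (\<lambda>q. XX (snd (snd q)))"
    by (rule continuous_on_compose2[OF cont_XX]) (auto intro!: continuous_intros)
  have cR: "continuous_on ?S (\<lambda>q. rr (snd (snd q)))"
    by (rule continuous_on_compose2[OF cont_rr]) (auto intro!: continuous_intros)
  have "continuous_on ?S ht"
    unfolding ht_def[abs_def]
    by (intro continuous_intros continuous_on_Pair continuous_on_add continuous_on_mult cX cR)
  moreover have "ht \<in> ?S \<rightarrow> UNIV \<times> Yset"
    using seg_Y by (auto simp: ht_def)
  ultimately show ?thesis by simp
qed

lemma cont_HG: "continuous_map (prod_topology (top_of_set {0..1}) Gamma_S1) Gamma_S1 HG"
proof -
  have loc: "locally_compact_space (top_of_set {0..1::real})"
    by (rule compact_imp_locally_compact_space, rule compact_space_subtopology) simp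
  have reg: "Hausdorff_space (top_of_set {0..1::real}) \<or> regular_space (top_of_set {0..1::real})"
    by (simp add: Hausdorff_space_subtopology)
  have qp: "quotient_map (prod_topology (top_of_set {0..1::real}) X0) (prod_topology (top_of_set {0..1::real}) Gamma_S1)
              (\<lambda>(x, y). (x, orbit_Z y))"
    by (rule quotient_map_prod_right[OF loc reg qmap])
  show ?thesis
  proof (rule continuous_compose_quotient_map[OF qp])
    have e: "HG \<circ> (\<lambda>(x, y). (x, orbit_Z y)) = orbit_Z \<circ> ht"
      by (auto simp: fun_eq_iff HG_q)
    have "continuous_map (top_of_set ({0..1} \<times> (UNIV \<times> Yset))) Gamma_S1 (orbit_Z \<circ> ht)"
      by (rule continuous_map_compose[OF cont_ht cont_q])
    then show "continuous_map (prod_topology (top_of_set {0..1}) X0) Gamma_S1 (HG \<circ> (\<lambda>(x, y). (x, orbit_Z y)))"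
      unfolding e by simp
  qed
qed

lemma hom_G: "homotopic_with (\<lambda>x. True) Gamma_S1 Gamma_S1 (gW \<circ> fG) id"
proof -
  have a: "\<forall>x\<in>topspace Gamma_S1. HG (0, x) = (gW \<circ> fG) x"
  proof
    fix x assume "x \<in> topspace Gamma_S1"
    then obtain p where p: "p \<in> UNIV \<times> Yset" "x = orbit_Z p" using topspace_Gamma by auto
    have "HG (0, x) = orbit_Z (XX (snd p), rr (snd p))" using p by (simp add: HG_q ht_def)
    also have "\<dots> = gW (Phi (snd p))" using consistency p by auto
    also have "\<dots> = (gW \<circ> fG) x" using p by (simp add: fG_q)
    finally show "HG (0, x) = (gW \<circ> fG) x" .
  qed
  have b: "\<forall>x\<in>topspace Gamma_S1. HG (1, x) = id x"
  proof
    fix x assume "x \<in> topspace Gamma_S1"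
    then obtain p where p: "p \<in> UNIV \<times> Yset" "x = orbit_Z p" using topspace_Gamma by auto
    show "HG (1, x) = id x" using p by (simp add: HG_q ht_def)
  qed
  show ?thesis
    by (subst homotopic_with) (use cont_HG a b in \<open>auto intro!: exI[of _ HG]\<close>)
qed

theorem theorem3p2:
  shows "Gamma_S1 homotopy_equivalent_space wedge_two_circles"
  unfolding homotopy_equivalent_space_def
  using cont_f cont_g hom_G hom_W by blast


end
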